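(* Let $k \in \mathbb{N}$ with $k \geq 2$. Then $$q(k) < \begin{cases} \frac{k}{3} & \text{if } k \bmod 3 = 0,\\ \left\lceil\frac{k}{2}\right\rceil & \text{otherwise,}\end{cases}$$ i.e. no index $q$ at least this value is admissible.
   Context: For a graph $G$ with an edge-colouring $f\colon E(G)\to\{1,\dots,k\}$ and $1\le j\le k$: $e_j[v]$ is the number of edges coloured $j$ in the subgraph induced by the closed neighbourhood $N[v]$ of $v$, and $\deg_j(v)$ is the number of edges coloured $j$ incident to $v$. Given a strictly increasing sequence of positive integers $(a_1,\dots,a_k)$, a $d$-regular graph $G$ with $d=\sum_j a_j$ is an $(a_1,\dots,a_k)$-flip graph if there is an edge-colouring with colours $\{1,\dots,k\}$ such that $\deg_j(v)=a_j$ for all vertices $v$ and all $j$, and $e_k[v]<e_{k-1}[v]<\dots<e_1[v]$ for every vertex $v$; the sequence is then a $k$-flip sequence. Call an index $q\in\{1,\dots,k-1\}$ admissible if there exists $h\in\mathbb{N}$ such that for every $N\in\mathbb{N}$ there is a $k$-flip sequence $(a_1,\dots,a_k)$ with $a_q=h$ and $a_k>N$; $q(k)$ denotes the largest admissible index. *)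

theory Defs
  imports Main
begin

text \<open>Finite simple graphs on vertex set V (vertices represented by natural numbers,
  which is no loss of generality for finite graphs); edges are 2-element subsets of V.\<close>

definition simple_graph :: "nat set \<Rightarrow> nat set set \<Rightarrow> bool" where
  "simple_graph V E \<longleftrightarrow> finite V \<and> (\<forall>e\<in>E. e \<subseteq> V \<and> card e = 2)"

definition degree :: "nat set set \<Rightarrow> nat \<Rightarrow> nat" where
  "degree E v = card {e\<in>E. v \<in> e}"

definition closed_nbhd :: "nat set set \<Rightarrow> nat \<Rightarrow> nat set" where
  "closed_nbhd E v = insert v {u. {u, v} \<in> E}"

definition col_deg :: "nat set set \<Rightarrow> (nat set \<Rightarrow> nat) \<Rightarrow> nat \<Rightarrow> nat \<Rightarrow> nat" where
  "col_deg E f j v = card {e\<in>E. v \<in> e \<and> f e = j}"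

definition col_edges_nbhd :: "nat set set \<Rightarrow> (nat set \<Rightarrow> nat) \<Rightarrow> nat \<Rightarrow> nat \<Rightarrow> nat" where
  "col_edges_nbhd E f j v = card {e\<in>E. e \<subseteq> closed_nbhd E v \<and> f e = j}"

text \<open>Sequences (a_1,...,a_k) are functions nat => nat; only indices 1..k matter.\<close>
definition strictly_incr_pos :: "nat \<Rightarrow> (nat \<Rightarrow> nat) \<Rightarrow> bool" where
  "strictly_incr_pos k a \<longleftrightarrow> 0 < a 1 \<and> (\<forall>j\<in>{1..<k}. a j < a (Suc j))"

definition flip_graph :: "nat \<Rightarrow> (nat \<Rightarrow> nat) \<Rightarrow> nat set \<Rightarrow> nat set set \<Rightarrow> bool" where
  "flip_graph k a V E \<longleftrightarrow>
     simple_graph V E \<and> V \<noteq> {} \<and>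
     (\<forall>v\<in>V. degree E v = (\<Sum>j=1..k. a j)) \<and>
     (\<exists>f. (\<forall>e\<in>E. f e \<in> {1..k}) \<and>
          (\<forall>v\<in>V. \<forall>j\<in>{1..k}. col_deg E f j v = a j) \<and>
          (\<forall>v\<in>V. \<forall>j\<in>{1..<k}. col_edges_nbhd E f (Suc j) v < col_edges_nbhd E f j v))"

definition flip_sequence :: "nat \<Rightarrow> (nat \<Rightarrow> nat) \<Rightarrow> bool" where
  "flip_sequence k a \<longleftrightarrow> strictly_incr_pos k a \<and> (\<exists>V E. flip_graph k a V E)"

definition admissible :: "nat \<Rightarrow> nat \<Rightarrow> bool" where
  "admissible k q \<longleftrightarrow> q \<in> {1..<k} \<and>
     (\<exists>h::nat. \<forall>N::nat. \<exists>a. flip_sequence k a \<and> a q = h \<and> a k > N)"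

end

theory Submission imports Defs begin

lemma card_colour_split:
  fixes k :: nat and g :: "'a \<Rightarrow> nat"
  assumes "finite A" "\<forall>x\<in>A. P x \<longrightarrow> g x \<in> {1..k}"
  shows "card {x\<in>A. P x \<and> C (g x)} = (\<Sum>j\<in>{j\<in>{1..k}. C j}. card {x\<in>A. P x \<and> g x = j})"
proof -
  have fin: "finite {j\<in>{1..k}. C j}" by (rule finite_subset[of _ "{1..k}"]) auto
  have eq: "{x\<in>A. P x \<and> C (g x)} = (\<Union>j\<in>{j\<in>{1..k}. C j}. {x\<in>A. P x \<and> g x = j})"
    using assms(2) by auto
  show ?thesis unfolding eq
    by (rule card_UN_disjoint) (use fin assms(1) in auto)
qed

lemma dec_chain:
  fixes g :: "nat \<Rightarrow> nat"
  assumes "\<forall>j\<in>{1..<k}. g (Suc j) < g j" "1 \<le> i" "i \<le> j" "j \<le> k"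
  shows "g j + (j - i) \<le> g i"
  using assms(3,4)
proof (induction j rule: dec_induct)
  case base then show ?case by simp
next
  case (step m)
  then have "g (Suc m) < g m" using assms(1,2) by auto
  then show ?case using step by auto
qed

lemma inc_chain:
  fixes a :: "nat \<Rightarrow> nat"
  assumes "\<forall>j\<in>{1..<k}. a j < a (Suc j)" "1 \<le> i" "i \<le> j" "j \<le> k"
  shows "a i + (j - i) \<le> a j"
  using assms(3,4)
proof (induction j rule: dec_induct)
  case base then show ?case by simp
next
  case (step m)
  then have "a m < a (Suc m)" using assms(1,2) by auto
  then show ?case using step by auto
qed

lemma two_elem:
  assumes "card e = 2" "u \<in> e" "v \<in> e" "u \<noteq> v"
  shows "e = {u, v}"
  using assms by (auto simp: card_2_iff)

lemma sigma_ge2: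
  assumes "finite S" "card S \<ge> 2"
  obtains u w where "u \<in> S" "w \<in> S" "u \<noteq> w"
proof -
  obtain u where u: "u \<in> S" using assms by fastforce
  have "card (S - {u}) \<ge> 1" using assms u by simp
  then have "S - {u} \<noteq> {}" by (metis card.empty not_one_le_zero)
  then obtain w where "w \<in> S - {u}" by blast
  then show ?thesis using that u by blast
qed

definition Xs :: "nat set set \<Rightarrow> (nat set \<Rightarrow> nat) \<Rightarrow> (nat \<Rightarrow> bool) \<Rightarrow> nat \<Rightarrow> nat set set" where
  "Xs E f C v = {e\<in>E. v \<notin> e \<and> e \<subseteq> closed_nbhd E v \<and> C (f e)}"

definition Tri :: "nat set \<Rightarrow> nat set set \<Rightarrow> nat set set" where
  "Tri V E = {t. t \<subseteq> V \<and> card t = 3 \<and> (\<forall>u\<in>t. \<forall>w\<in>t. u \<noteq> w \<longrightarrow> {u, w} \<in> E)}"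

definition sig :: "(nat set \<Rightarrow> nat) \<Rightarrow> (nat \<Rightarrow> bool) \<Rightarrow> nat set \<Rightarrow> nat" where
  "sig f C t = card {v\<in>t. C (f (t - {v}))}"

lemma finite_E: "simple_graph V E \<Longrightarrow> finite E"
  unfolding simple_graph_def by (rule finite_subset[of _ "Pow V"]) auto

lemma finite_Tri: "simple_graph V E \<Longrightarrow> finite (Tri V E)"
  unfolding simple_graph_def Tri_def
  by (rule finite_subset[of _ "Pow V"]) auto

lemma edge_form:
  assumes "simple_graph V E" "e \<in> E"
  obtains x y where "e = {x, y}" "x \<noteq> y" "x \<in> V" "y \<in> V"
proof -
  have eV: "e \<subseteq> V" and c2: "card e = 2" using assms unfolding simple_graph_def by auto
  from c2 obtain x y where xy: "e = {x, y}" "x \<noteq> y" by (meson card_2_iff)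
  show thesis by (rule that[OF xy]) (use eV xy in auto)
qed

lemma tri_sum:
  assumes sg: "simple_graph V E"
  shows "(\<Sum>v\<in>V. card (Xs E f C v)) = (\<Sum>t\<in>Tri V E. sig f C t)"
proof -
  have fV: "finite V" using sg unfolding simple_graph_def by auto
  have fE: "finite E" using finite_E[OF sg] .
  have fX: "\<And>v. finite (Xs E f C v)" unfolding Xs_def using fE by auto
  have fT: "finite (Tri V E)" using finite_Tri[OF sg] .
  have c1: "card (Sigma V (Xs E f C)) = (\<Sum>v\<in>V. card (Xs E f C v))"
    using card_SigmaI[OF fV] fX by auto
  let ?Pt = "Sigma (Tri V E) (\<lambda>t. {v\<in>t. C (f (t - {v}))})"
  have fTt: "\<And>t. t \<in> Tri V E \<Longrightarrow> finite t" using fV unfolding Tri_def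
    by (auto intro: finite_subset)
  have c2: "card ?Pt = (\<Sum>t\<in>Tri V E. sig f C t)"
    unfolding sig_def by (rule card_SigmaI) (use fT fTt in auto)
  let ?h = "\<lambda>(v, e). (insert v e, v)"
  have inj: "inj_on ?h (Sigma V (Xs E f C))"
    unfolding Xs_def by (rule inj_onI) (clarsimp, metis Diff_insert_absorb)
  have img: "?h ` Sigma V (Xs E f C) = ?Pt"
  proof
    show "?h ` Sigma V (Xs E f C) \<subseteq> ?Pt"
    proof (rule image_subsetI)
      fix p assume "p \<in> Sigma V (Xs E f C)"
      then obtain v e where p: "p = (v, e)" and v: "v \<in> V" and e: "e \<in> Xs E f C v" by blast
      from e have eE: "e \<in> E" and ve: "v \<notin> e" and en: "e \<subseteq> closed_nbhd E v" and Ce: "C (f e)"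
        unfolding Xs_def by auto
      obtain x y where xy: "e = {x, y}" "x \<noteq> y" "x \<in> V" "y \<in> V" using edge_form[OF sg eE] .
      have ex: "{x, v} \<in> E" using en xy ve unfolding closed_nbhd_def by auto
      have ey: "{y, v} \<in> E" using en xy ve unfolding closed_nbhd_def by auto
      have "insert v e \<in> Tri V E"
        unfolding Tri_def using xy ve v ex ey eE
        by (auto simp: insert_commute)
      moreover have "insert v e - {v} = e" using ve by auto
      ultimately show "?h p \<in> ?Pt" using Ce p by simp
    qed
  next
    show "?Pt \<subseteq> ?h ` Sigma V (Xs E f C)"
    proof (rule subsetI)
      fix p assume "p \<in> ?Pt"
      then obtain t v where p: "p = (t, v)" and t: "t \<in> Tri V E" and vt: "v \<in> t" and Cv: "C (f (t - {v}))" by blast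
      have tV: "t \<subseteq> V" and c3: "card t = 3" and ed: "\<forall>u\<in>t. \<forall>w\<in>t. u \<noteq> w \<longrightarrow> {u, w} \<in> E"
        using t unfolding Tri_def by auto
      have "t - {v} \<in> Xs E f C v"
      proof -
        have ft: "finite t" using c3 by (metis card.infinite zero_neq_numeral)
        have "card (t - {v}) = 2" using c3 vt ft by simp
        then obtain b c where bc: "t - {v} = {b, c}" "b \<noteq> c" by (meson card_2_iff)
        have "b \<in> t" "c \<in> t" using bc(1) by blast+
        then have "{b, c} \<in> E" using ed bc(2) by blast
        then have "t - {v} \<in> E" using bc(1) by simp
        moreover have "t - {v} \<subseteq> closed_nbhd E v"
          unfolding closed_nbhd_def using ed vt by auto
        ultimately show ?thesis unfolding Xs_def using Cv by auto
      qed
      moreover have "t = insert v (t - {v})" using vt by auto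
      ultimately show "p \<in> ?h ` Sigma V (Xs E f C)" unfolding p
        using vt tV by (intro image_eqI[of _ _ "(v, t - {v})"]) auto
    qed
  qed
  have "card (Sigma V (Xs E f C)) = card ?Pt"
    using card_image[OF inj] img by simp
  then show ?thesis using c1 c2 by simp
qed

lemma card_filter_compl:
  assumes "finite t"
  shows "card {v\<in>t. P v} + card {v\<in>t. \<not> P v} = card t"
proof -
  have "{v\<in>t. P v} \<union> {v\<in>t. \<not> P v} = t" by auto
  moreover have "card ({v\<in>t. P v} \<union> {v\<in>t. \<not> P v}) = card {v\<in>t. P v} + card {v\<in>t. \<not> P v}"
    by (rule card_Un_disjoint) (use assms in auto)
  ultimately show ?thesis by simp
qed

lemma sig_partition:
  assumes "t \<in> Tri V E"
  shows "sig f (\<lambda>c. c \<le> q) t + sig f (\<lambda>c. \<not> c \<le> q) t = 3"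
proof -
  have "card t = 3" using assms unfolding Tri_def by auto
  then have "finite t" by (metis card.infinite zero_neq_numeral)
  then show ?thesis unfolding sig_def using card_filter_compl[of t] \<open>card t = 3\<close> by simp
qed

definition Ns :: "nat set set \<Rightarrow> (nat set \<Rightarrow> nat) \<Rightarrow> nat \<Rightarrow> nat \<Rightarrow> nat set" where
  "Ns E f q b = {a. {a, b} \<in> E \<and> f {a, b} \<le> q}"

lemma card_Ns:
  assumes sg: "simple_graph V E" and b: "b \<in> V"
  shows "finite (Ns E f q b)" "card (Ns E f q b) \<le> card {e\<in>E. b \<in> e \<and> f e \<le> q}"
proof -
  have sub: "Ns E f q b \<subseteq> V" using sg unfolding Ns_def simple_graph_def by auto
  then show fin: "finite (Ns E f q b)" using sg unfolding simple_graph_def by (auto intro: finite_subset)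
  have fE: "finite E" using finite_E[OF sg] .
  have inj: "inj_on (\<lambda>a. {a, b}) (Ns E f q b)"
    by (rule inj_onI) (metis doubleton_eq_iff)
  have "(\<lambda>a. {a, b}) ` Ns E f q b \<subseteq> {e\<in>E. b \<in> e \<and> f e \<le> q}"
    unfolding Ns_def by auto
  then show "card (Ns E f q b) \<le> card {e\<in>E. b \<in> e \<and> f e \<le> q}"
    using card_inj_on_le[OF inj] fE by auto
qed

lemma bad_bound:
  assumes sg: "simple_graph V E"
    and sdeg: "\<forall>v\<in>V. card {e\<in>E. v \<in> e \<and> f e \<le> q} = s"
  shows "card {t\<in>Tri V E. 2 \<le> sig f (\<lambda>c. c \<le> q) t} \<le> card V * s^2"
proof -
  have fV: "finite V" using sg unfolding simple_graph_def by auto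
  let ?W = "Sigma V (\<lambda>b. Ns E f q b \<times> Ns E f q b)"
  let ?g = "\<lambda>(b, a, c). {a, b, c}"
  have finW: "finite ?W" using fV card_Ns(1)[OF sg] by auto
  have cW: "card ?W = (\<Sum>b\<in>V. card (Ns E f q b) * card (Ns E f q b))"
  proof -
    have "card ?W = (\<Sum>b\<in>V. card (Ns E f q b \<times> Ns E f q b))"
      by (rule card_SigmaI[OF fV]) (use card_Ns(1)[OF sg] in auto)
    then show ?thesis by (simp add: card_cartesian_product)
  qed
  have "(\<Sum>b\<in>V. card (Ns E f q b) * card (Ns E f q b)) \<le> (\<Sum>b\<in>V. s * s)"
  proof (rule sum_mono)
    fix b assume "b \<in> V"
    then have "card (Ns E f q b) \<le> s" using card_Ns(2)[OF sg] sdeg by metis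
    then show "card (Ns E f q b) * card (Ns E f q b) \<le> s * s" by (simp add: mult_le_mono)
  qed
  then have cW2: "card ?W \<le> card V * s^2" using cW by (simp add: power2_eq_square)
  have sub: "{t\<in>Tri V E. 2 \<le> sig f (\<lambda>c. c \<le> q) t} \<subseteq> ?g ` ?W"
  proof
    fix t assume "t \<in> {t\<in>Tri V E. 2 \<le> sig f (\<lambda>c. c \<le> q) t}"
    then have t: "t \<in> Tri V E" and s2: "2 \<le> card {v\<in>t. f (t - {v}) \<le> q}"
      unfolding sig_def by auto
    have tV: "t \<subseteq> V" and c3: "card t = 3" and ed: "\<forall>u\<in>t. \<forall>w\<in>t. u \<noteq> w \<longrightarrow> {u, w} \<in> E"
      using t unfolding Tri_def by auto
    have ft: "finite t" using c3 by (metis card.infinite zero_neq_numeral)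
    obtain u w where u: "u \<in> {v\<in>t. f (t - {v}) \<le> q}" and w: "w \<in> {v\<in>t. f (t - {v}) \<le> q}" and uw: "u \<noteq> w"
      using sigma_ge2[OF _ s2] ft by auto
    have "card (t - {u, w}) = 1" using c3 u w uw ft by (simp add: card_Diff_subset)
    then obtain b where "t - {u, w} = {b}" using card_1_singletonE by blast
    then have b: "b \<in> t" "b \<noteq> u" "b \<noteq> w" by auto
    have teq: "t = {u, w, b}"
    proof -
      have "{u, w, b} \<subseteq> t" using u w b by auto
      moreover have "card {u, w, b} = 3" using uw b by auto
      ultimately show ?thesis using card_subset_eq[OF ft] c3 by metis
    qed
    have e1: "t - {u} = {w, b}" using teq uw b by auto
    have e2: "t - {w} = {u, b}" using teq uw b by auto
    have "u \<in> Ns E f q b" unfolding Ns_def using ed u w b e2 uw by auto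
    moreover have "w \<in> Ns E f q b" unfolding Ns_def using ed u w b e1 uw by auto
    moreover have "b \<in> V" using b tV by auto
    ultimately have "(b, u, w) \<in> ?W" by auto
    moreover have "t = ?g (b, u, w)" using teq by auto
    ultimately show "t \<in> ?g ` ?W" by blast
  qed
  have "card {t\<in>Tri V E. 2 \<le> sig f (\<lambda>c. c \<le> q) t} \<le> card (?g ` ?W)"
    by (rule card_mono) (use finW sub in auto)
  also have "\<dots> \<le> card ?W" by (rule card_image_le[OF finW])
  finally show ?thesis using cW2 by linarith
qed

lemma tri_ineq:
  assumes sg: "simple_graph V E"
    and sdeg: "\<forall>v\<in>V. card {e\<in>E. v \<in> e \<and> f e \<le> q} = s"
  shows "2 * (\<Sum>t\<in>Tri V E. sig f (\<lambda>c. c \<le> q) t)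
           \<le> (\<Sum>t\<in>Tri V E. sig f (\<lambda>c. \<not> c \<le> q) t) + 6 * (card V * s^2)"
proof -
  let ?S = "sig f (\<lambda>c. c \<le> q)" and ?B = "sig f (\<lambda>c. \<not> c \<le> q)"
  let ?T = "Tri V E"
  have fT: "finite ?T" using finite_Tri[OF sg] .
  have "(\<Sum>t\<in>?T. 2 * ?S t) \<le> (\<Sum>t\<in>?T. ?B t + (if 2 \<le> ?S t then 6 else 0))"
  proof (rule sum_mono)
    fix t assume "t \<in> ?T"
    then have "?S t + ?B t = 3" by (rule sig_partition)
    then show "2 * ?S t \<le> ?B t + (if 2 \<le> ?S t then 6 else 0)" by auto
  qed
  also have "\<dots> = (\<Sum>t\<in>?T. ?B t) + (\<Sum>t\<in>?T. (if 2 \<le> ?S t then 6 else 0))"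
    by (rule sum.distrib)
  also have "(\<Sum>t\<in>?T. (if 2 \<le> ?S t then 6 else 0)) = 6 * card {t\<in>?T. 2 \<le> ?S t}"
    using fT by (simp add: sum.If_cases Int_def conj_commute)
  also have "\<dots> \<le> 6 * (card V * s^2)" using bad_bound[OF sg sdeg] by simp
  finally show ?thesis by (simp add: sum_distrib_left)
qed

lemma vertex_split:
  assumes sg: "simple_graph V E" and v: "v \<in> V"
    and fcol: "\<forall>e\<in>E. f e \<in> {1..k}"
    and deg: "\<forall>j\<in>{1..k}. col_deg E f j v = a j"
  shows "(\<Sum>j\<in>{j\<in>{1..k}. C j}. col_edges_nbhd E f j v)
           = (\<Sum>j\<in>{j\<in>{1..k}. C j}. a j) + card (Xs E f C v)"
    and "card {e\<in>E. v \<in> e \<and> C (f e)} = (\<Sum>j\<in>{j\<in>{1..k}. C j}. a j)"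
proof -
  have fE: "finite E" using finite_E[OF sg] .
  have s1: "card {e\<in>E. e \<subseteq> closed_nbhd E v \<and> C (f e)} = (\<Sum>j\<in>{j\<in>{1..k}. C j}. col_edges_nbhd E f j v)"
    unfolding col_edges_nbhd_def by (rule card_colour_split) (use fE fcol in auto)
  have "card {e\<in>E. v \<in> e \<and> C (f e)} = (\<Sum>j\<in>{j\<in>{1..k}. C j}. col_deg E f j v)"
    unfolding col_deg_def by (rule card_colour_split) (use fE fcol in auto)
  also have "\<dots> = (\<Sum>j\<in>{j\<in>{1..k}. C j}. a j)" using deg by (intro sum.cong) auto
  finally show s2: "card {e\<in>E. v \<in> e \<and> C (f e)} = (\<Sum>j\<in>{j\<in>{1..k}. C j}. a j)" .
  have inc: "\<And>e. e \<in> E \<Longrightarrow> v \<in> e \<Longrightarrow> e \<subseteq> closed_nbhd E v"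
  proof
    fix e u assume e: "e \<in> E" "v \<in> e" and u: "u \<in> e"
    show "u \<in> closed_nbhd E v"
    proof (cases "u = v")
      case True then show ?thesis unfolding closed_nbhd_def by auto
    next
      case False
      have "card e = 2" using sg e unfolding simple_graph_def by auto
      then have "e = {u, v}" using two_elem u e False by metis
      then show ?thesis using e unfolding closed_nbhd_def by auto
    qed
  qed
  have un: "{e\<in>E. e \<subseteq> closed_nbhd E v \<and> C (f e)} = {e\<in>E. v \<in> e \<and> C (f e)} \<union> Xs E f C v"
    unfolding Xs_def using inc by auto
  have "card ({e\<in>E. v \<in> e \<and> C (f e)} \<union> Xs E f C v) = card {e\<in>E. v \<in> e \<and> C (f e)} + card (Xs E f C v)"
    by (rule card_Un_disjoint) (use fE in \<open>auto simp: Xs_def\<close>)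
  then show "(\<Sum>j\<in>{j\<in>{1..k}. C j}. col_edges_nbhd E f j v)
           = (\<Sum>j\<in>{j\<in>{1..k}. C j}. a j) + card (Xs E f C v)"
    using s1 s2 un by simp
qed

lemma vertex_ineq:
  fixes g :: "nat \<Rightarrow> nat"
  assumes ch: "\<forall>j\<in>{1..<k}. g (Suc j) < g j" and q: "1 \<le> q" "q < k" "k \<le> 3 * q"
  shows "(\<Sum>j=Suc q..k. g j) \<le> 2 * (\<Sum>j=1..q. g j)"
proof -
  let ?x = "g (Suc q)"
  have "(\<Sum>j=1..q. ?x) \<le> (\<Sum>j=1..q. g j)"
  proof (rule sum_mono)
    fix j assume "j \<in> {1..q}"
    then show "?x \<le> g j" using dec_chain[OF ch, of j "Suc q"] q by auto
  qed
  then have l: "q * ?x \<le> (\<Sum>j=1..q. g j)" by simp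
  have "(\<Sum>j=Suc q..k. g j) \<le> (\<Sum>j=Suc q..k. ?x)"
  proof (rule sum_mono)
    fix j assume "j \<in> {Suc q..k}"
    then show "g j \<le> ?x" using dec_chain[OF ch, of "Suc q" j] q by auto
  qed
  then have r: "(\<Sum>j=Suc q..k. g j) \<le> (k - q) * ?x" by simp
  have "(k - q) * ?x \<le> (2 * q) * ?x" using q by (intro mult_right_mono) auto
  then show ?thesis using l r by linarith
qed

lemma key:
  assumes sg: "simple_graph V E" and ne: "V \<noteq> {}"
    and fcol: "\<forall>e\<in>E. f e \<in> {1..k}"
    and deg: "\<forall>v\<in>V. \<forall>j\<in>{1..k}. col_deg E f j v = a j"
    and ch: "\<forall>v\<in>V. \<forall>j\<in>{1..<k}. col_edges_nbhd E f (Suc j) v < col_edges_nbhd E f j v"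
    and q: "1 \<le> q" "q < k" "k \<le> 3 * q"
  shows "(\<Sum>j=Suc q..k. a j) \<le> 2 * (\<Sum>j=1..q. a j) + 6 * (\<Sum>j=1..q. a j)^2"
proof -
  define s where "s = (\<Sum>j=1..q. a j)"
  define bs where "bs = (\<Sum>j=Suc q..k. a j)"
  define n where "n = card V"
  have fV: "finite V" using sg unfolding simple_graph_def by auto
  have n0: "0 < n" unfolding n_def using fV ne by (simp add: card_gt_0_iff)
  have J1: "{j\<in>{1..k}. j \<le> q} = {1..q}" using q by auto
  have J2: "{j\<in>{1..k}. \<not> j \<le> q} = {Suc q..k}" using q by auto
  let ?P = "\<lambda>v. card (Xs E f (\<lambda>c. c \<le> q) v)" and ?Q = "\<lambda>v. card (Xs E f (\<lambda>c. \<not> c \<le> q) v)"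
  have sdeg: "\<forall>v\<in>V. card {e\<in>E. v \<in> e \<and> f e \<le> q} = s"
    using vertex_split(2)[OF sg _ fcol, of _ a "\<lambda>c. c \<le> q"] deg J1 unfolding s_def by auto
  have pv: "bs + ?Q v \<le> 2 * (s + ?P v)" if v: "v \<in> V" for v
  proof -
    have A: "(\<Sum>j=1..q. col_edges_nbhd E f j v) = s + ?P v"
      using vertex_split(1)[OF sg v fcol, of a "\<lambda>c. c \<le> q"] deg v J1 unfolding s_def by auto
    have B: "(\<Sum>j=Suc q..k. col_edges_nbhd E f j v) = bs + ?Q v"
      using vertex_split(1)[OF sg v fcol, of a "\<lambda>c. \<not> c \<le> q"] deg v J2 unfolding bs_def by auto
    have "(\<Sum>j=Suc q..k. col_edges_nbhd E f j v) \<le> 2 * (\<Sum>j=1..q. col_edges_nbhd E f j v)"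
      by (rule vertex_ineq) (use ch v q in auto)
    then show ?thesis using A B by simp
  qed
  have "(\<Sum>v\<in>V. bs + ?Q v) \<le> (\<Sum>v\<in>V. 2 * (s + ?P v))" by (rule sum_mono) (use pv in auto)
  then have S1: "n * bs + (\<Sum>v\<in>V. ?Q v) \<le> 2 * (n * s) + 2 * (\<Sum>v\<in>V. ?P v)"
    unfolding n_def by (simp add: sum.distrib sum_distrib_left)
  have S2: "2 * (\<Sum>v\<in>V. ?P v) \<le> (\<Sum>v\<in>V. ?Q v) + 6 * (n * s^2)"
    using tri_ineq[OF sg sdeg] tri_sum[OF sg] unfolding n_def by simp
  have "n * bs \<le> n * (2 * s + 6 * s^2)" using S1 S2 by (simp add: algebra_simps)
  then have "bs \<le> 2 * s + 6 * s^2" using n0 by simp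
  then show ?thesis unfolding s_def bs_def .
qed

theorem theorem4p2:
  fixes k q :: nat
  assumes "k \<ge> 2"
    and "admissible k q"
  shows "q < (if k mod 3 = 0 then k div 3 else (k + 1) div 2)"
proof (rule ccontr)
  assume neg: "\<not> q < (if k mod 3 = 0 then k div 3 else (k + 1) div 2)"
  have k3: "k \<le> 3 * q"
  proof (cases "k mod 3 = 0")
    case True then have "k div 3 \<le> q" using neg by simp
    then show ?thesis using True by presburger
  next
    case False then have "(k + 1) div 2 \<le> q" using neg by simp
    then show ?thesis by presburger
  qed
  have qk: "1 \<le> q" "q < k" using assms(2) unfolding admissible_def by auto
  obtain h where hh: "\<forall>N::nat. \<exists>a. flip_sequence k a \<and> a q = h \<and> a k > N"
    using assms(2) unfolding admissible_def by blast
  obtain a where fs: "flip_sequence k a" and aq: "a q = h" and ak: "a k > 2 * (q * h) + 6 * (q * h)^2"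
    using hh by blast
  have inc: "\<forall>j\<in>{1..<k}. a j < a (Suc j)" using fs unfolding flip_sequence_def strictly_incr_pos_def by auto
  obtain V E where fg: "flip_graph k a V E" using fs unfolding flip_sequence_def by blast
  then obtain f where sg: "simple_graph V E" and ne: "V \<noteq> {}"
    and fcol: "\<forall>e\<in>E. f e \<in> {1..k}"
    and deg: "\<forall>v\<in>V. \<forall>j\<in>{1..k}. col_deg E f j v = a j"
    and ch: "\<forall>v\<in>V. \<forall>j\<in>{1..<k}. col_edges_nbhd E f (Suc j) v < col_edges_nbhd E f j v"
    unfolding flip_graph_def by blast
  have K: "(\<Sum>j=Suc q..k. a j) \<le> 2 * (\<Sum>j=1..q. a j) + 6 * (\<Sum>j=1..q. a j)^2"
    by (rule key[OF sg ne fcol deg ch qk k3])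
  have "a k \<le> (\<Sum>j=Suc q..k. a j)" using qk by (intro member_le_sum) auto
  moreover have s: "(\<Sum>j=1..q. a j) \<le> q * h"
  proof -
    have "(\<Sum>j=1..q. a j) \<le> (\<Sum>j=1..q. a q)"
    proof (rule sum_mono)
      fix j assume "j \<in> {1..q}"
      then show "a j \<le> a q" using inc_chain[OF inc, of j q] qk by auto
    qed
    then show ?thesis using aq by simp
  qed
  moreover have "(\<Sum>j=1..q. a j)^2 \<le> (q * h)^2" using s by (rule power_mono) simp
  ultimately have "a k \<le> 2 * (q * h) + 6 * (q * h)^2" using K by linarith
  then show False using ak by simp
qed

end
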